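(* Let $f_{\mathcal{X}}:\mathcal{X}\to\mathbb{R}^d$, $f_{\mathcal{Y}}:\mathcal{Y}\to\mathbb{R}^d$, $\tau>0$ and $g(x,y)=f_{\mathcal{X}}(x)^\top f_{\mathcal{Y}}(y)/\tau$. Let $g^*(x,y)=\ln\frac{p(x,y)}{p(x)p(y)}+\Gamma$ for some constant $\Gamma\in\mathbb{R}$. Assume there exist $K$ pairwise disjoint measurable subsets $\mathcal{Y}_1,\dots,\mathcal{Y}_K\subseteq\mathcal{Y}$ with $P_Y(\mathcal{Y}_i)>0$ and constants $\epsilon_1,\epsilon_2\ge0$ such that, for all $x\in\operatorname{supp}p_X$ and all $c\in[K]$, $$\mathrm{KL}\big(P_C(\cdot\mid x)\,\big\|\,P_C(\cdot\mid x;(\mathcal{Y}_i)_{i\in[K]})\big)\le\epsilon_1,\qquad \mathrm{KL}\big(p_Y(\cdot\mid\mathcal{Y}_c)\,\big\|\,p_Y(\cdot\mid x,\mathcal{Y}_c)\big)\le\epsilon_2.$$ Assume further there is $\Delta\ge0$ with $|g(x,y)-g^*(x,y)|\le\Delta$ for all $x\in\operatorname{supp}p_X$, $y\in\operatorname{supp}p_Y$. Then $$\inf_{W\in\mathbb{R}^{d\times K},\,b\in\mathbb{R}^K}\mathcal{L}_{\sup}\big(W^\top f_{\mathcal{X}}(\cdot)+b\big)-\mathcal{L}_{\sup}(h^* )\le\epsilon_1+\epsilon_2+2\Delta.$$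
   Context: $(X,Y)$ has joint density $p(x,y)$ on $\mathcal{X}\times\mathcal{Y}$ with marginal densities $p(x)=p_X(x)$, $p(y)=p_Y(y)$ and conditional density $p(y\mid x)$; $P_Y(\mathcal{Y}')=\int_{\mathcal{Y}'}p(y)dy$, $P_Y(\mathcal{Y}'\mid x)=\int_{\mathcal{Y}'}p(y\mid x)dy$; $\tilde{\mathcal{Y}}=\bigcup_i\mathcal{Y}_i$. Labels $C\in[K]=\{1,\dots,K\}$ with $P_C(c\mid x)$, $p(x,c)=P_C(c\mid x)p_X(x)$. $\mathcal{L}_{\sup}(h)=\mathbb{E}_{(x,c)\sim p(x,c)}\big[-\ln\frac{\exp h(x)_c}{\sum_{i=1}^K\exp h(x)_i}\big]$ for $h:\mathcal{X}\to\mathbb{R}^K$, and $h^*$ is a minimizer of $\mathcal{L}_{\sup}$ over all measurable $h$ (e.g. $h^*(x)_i=\ln P_C(i\mid x)$). $p_Y(y\mid\mathcal{Y}_i)=p(y)/P_Y(\mathcal{Y}_i)$ on $\mathcal{Y}_i$ and $0$ elsewhere; $p_Y(y\mid x,\mathcal{Y}_i)=p(y\mid x)/P_Y(\mathcal{Y}_i\mid x)$ on $\mathcal{Y}_i$ and $0$ elsewhere; $P_C(c\mid x;(\mathcal{Y}_i)_{i\in[K]})=P_Y(\mathcal{Y}_c\mid x)/P_Y(\tilde{\mathcal{Y}}\mid x)$. All expectations and KL divergences are assumed well defined. *)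

theory Defs
  imports "HOL-Probability.Probability"
begin

definition kl_term :: "real \<Rightarrow> real \<Rightarrow> ereal" where
  "kl_term a b = (if a = 0 then 0 else if b = 0 then \<infinity> else ereal (a * ln (a / b)))"

definition KL_discrete :: "nat \<Rightarrow> (nat \<Rightarrow> real) \<Rightarrow> (nat \<Rightarrow> real) \<Rightarrow> ereal" where
  "KL_discrete K P Q = (\<Sum>c\<in>{1..K}. kl_term (P c) (Q c))"

text \<open>KL divergence between two densities w.r.t. the reference measure M, i.e. the
  extended-valued Lebesgue integral of P ln(P/Q) (positive part minus negative part).\<close>
definition KL_density :: "'a measure \<Rightarrow> ('a \<Rightarrow> real) \<Rightarrow> ('a \<Rightarrow> real) \<Rightarrow> ereal" where
  "KL_density M P Q =
     enn2ereal (\<integral>\<^sup>+ y. e2ennreal (kl_term (P y) (Q y)) \<partial>M)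
   - enn2ereal (\<integral>\<^sup>+ y. e2ennreal (- kl_term (P y) (Q y)) \<partial>M)"

definition prob_Y :: "'y measure \<Rightarrow> ('y \<Rightarrow> real) \<Rightarrow> 'y set \<Rightarrow> real" where
  "prob_Y MY pY A = (\<integral> y. indicator A y * pY y \<partial>MY)"

definition cond_dens :: "('x \<Rightarrow> 'y \<Rightarrow> real) \<Rightarrow> ('x \<Rightarrow> real) \<Rightarrow> 'x \<Rightarrow> 'y \<Rightarrow> real" where
  "cond_dens p pX x y = p x y / pX x"

definition prob_Y_cond :: "'y measure \<Rightarrow> ('x \<Rightarrow> 'y \<Rightarrow> real) \<Rightarrow> ('x \<Rightarrow> real) \<Rightarrow> 'x \<Rightarrow> 'y set \<Rightarrow> real" where
  "prob_Y_cond MY p pX x A = (\<integral> y. indicator A y * cond_dens p pX x y \<partial>MY)"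

definition class_post_sets ::
  "'y measure \<Rightarrow> ('x \<Rightarrow> 'y \<Rightarrow> real) \<Rightarrow> ('x \<Rightarrow> real) \<Rightarrow> nat \<Rightarrow> (nat \<Rightarrow> 'y set) \<Rightarrow> 'x \<Rightarrow> nat \<Rightarrow> real" where
  "class_post_sets MY p pX K Ys x c =
     prob_Y_cond MY p pX x (Ys c) / prob_Y_cond MY p pX x (\<Union>i\<in>{1..K}. Ys i)"

definition dens_Y_given_set :: "'y measure \<Rightarrow> ('y \<Rightarrow> real) \<Rightarrow> 'y set \<Rightarrow> 'y \<Rightarrow> real" where
  "dens_Y_given_set MY pY A y = indicator A y * pY y / prob_Y MY pY A"

definition dens_Y_given_x_set ::
  "'y measure \<Rightarrow> ('x \<Rightarrow> 'y \<Rightarrow> real) \<Rightarrow> ('x \<Rightarrow> real) \<Rightarrow> 'x \<Rightarrow> 'y set \<Rightarrow> 'y \<Rightarrow> real" where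
  "dens_Y_given_x_set MY p pX x A y =
     indicator A y * cond_dens p pX x y / prob_Y_cond MY p pX x A"

text \<open>The integrand is nonnegative, so it is taken as a nonnegative (possibly infinite) integral.\<close>
definition L_sup ::
  "'x measure \<Rightarrow> ('x \<Rightarrow> real) \<Rightarrow> ('x \<Rightarrow> nat \<Rightarrow> real) \<Rightarrow> nat \<Rightarrow> ('x \<Rightarrow> nat \<Rightarrow> real) \<Rightarrow> ennreal" where
  "L_sup MX pX PC K h =
     (\<integral>\<^sup>+ x. ennreal (pX x * (\<Sum>c\<in>{1..K}.
         PC x c * - ln (exp (h x c) / (\<Sum>i\<in>{1..K}. exp (h x i))))) \<partial>MX)"

end

theory Submission
  imports Defs
begin

lemma gibbs_term:
  fixes P S :: real
  assumes "0 \<le> P" "0 < S"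
  shows "P * - ln P \<le> P * - ln S + (S - P)"
proof (cases "P = 0")
  case True then show ?thesis using assms by simp
next
  case False
  then have Pp: "0 < P" using assms by simp
  have "ln (S / P) \<le> S / P - 1" using Pp assms by (intro ln_le_minus_one) simp
  then have "P * ln (S / P) \<le> P * (S / P - 1)" using Pp by (intro mult_left_mono) auto
  moreover have "ln (S / P) = ln S - ln P" using Pp assms by (simp add: ln_div)
  ultimately show ?thesis using Pp by (simp add: algebra_simps)
qed

lemma ce_bound:
  fixes P r h hs :: "nat \<Rightarrow> real" and K :: nat
  assumes Pnn: "\<And>c. 0 \<le> P c" and Psum: "(\<Sum>c\<in>{1..K}. P c) = 1"
    and rpos: "\<And>c. c \<in> {1..K} \<Longrightarrow> 0 < r c"
    and KL: "(\<Sum>c\<in>{1..K}. kl_term (P c) (r c / (\<Sum>i\<in>{1..K}. r i))) \<le> ereal e1"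
    and hlo: "\<And>c. c \<in> {1..K} \<Longrightarrow> ln (r c) - e2 - D \<le> h c"
    and hup: "\<And>c. c \<in> {1..K} \<Longrightarrow> h c \<le> ln (r c) + D"
  shows "(\<Sum>c\<in>{1..K}. P c * - ln (exp (h c) / (\<Sum>i\<in>{1..K}. exp (h i))))
       \<le> (\<Sum>c\<in>{1..K}. P c * - ln (exp (hs c) / (\<Sum>i\<in>{1..K}. exp (hs i)))) + (e1 + e2 + 2 * D)"
proof -
  have Kne: "{1..K} \<noteq> {}" using Psum by (metis sum.empty zero_neq_one)
  define Rt where "Rt = (\<Sum>i\<in>{1..K}. r i)"
  have Rtpos: "0 < Rt" unfolding Rt_def using rpos Kne by (intro sum_pos) auto
  define Q where "Q c = r c / Rt" for c
  have Qpos: "c \<in> {1..K} \<Longrightarrow> 0 < Q c" for c using rpos Rtpos by (simp add: Q_def)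
  define Z where "Z = (\<Sum>i\<in>{1..K}. exp (h i))"
  have Zpos: "0 < Z" unfolding Z_def using Kne by (intro sum_pos) auto
  have "Z \<le> (\<Sum>i\<in>{1..K}. exp D * r i)" unfolding Z_def
  proof (intro sum_mono)
    fix i assume i: "i \<in> {1..K}"
    have "exp (h i) \<le> exp (ln (r i) + D)" using hup[OF i] by simp
    also have "\<dots> = exp D * r i" using rpos[OF i] by (simp add: exp_add)
    finally show "exp (h i) \<le> exp D * r i" .
  qed
  also have "\<dots> = exp D * Rt" by (simp add: Rt_def sum_distrib_left)
  finally have "ln Z \<le> ln (exp D * Rt)" using Zpos Rtpos by simp
  then have lnZ: "ln Z \<le> D + ln Rt" using Rtpos by (simp add: ln_mult)
  have step1: "- ln (exp (h c) / Z) \<le> - ln (Q c) + (e2 + 2 * D)" if c: "c \<in> {1..K}" for c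
  proof -
    have "- ln (exp (h c) / Z) = ln Z - h c" using Zpos by (simp add: ln_div)
    moreover have "- ln (Q c) = ln Rt - ln (r c)" using rpos[OF c] Rtpos by (simp add: Q_def ln_div)
    ultimately show ?thesis using lnZ hlo[OF c] by linarith
  qed
  have A: "(\<Sum>c\<in>{1..K}. P c * - ln (exp (h c) / Z)) \<le> (\<Sum>c\<in>{1..K}. P c * - ln (Q c) + P c * (e2 + 2 * D))"
  proof (intro sum_mono)
    fix c assume c: "c \<in> {1..K}"
    have "P c * - ln (exp (h c) / Z) \<le> P c * (- ln (Q c) + (e2 + 2 * D))"
      using step1[OF c] Pnn[of c] by (rule mult_left_mono)
    then show "P c * - ln (exp (h c) / Z) \<le> P c * - ln (Q c) + P c * (e2 + 2 * D)"
      by (simp add: algebra_simps)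
  qed
  also have "\<dots> = (\<Sum>c\<in>{1..K}. P c * - ln (Q c)) + (e2 + 2 * D)"
    by (simp only: sum.distrib flip: sum_distrib_right) (use Psum in simp)
  finally have A': "(\<Sum>c\<in>{1..K}. P c * - ln (exp (h c) / Z)) \<le> (\<Sum>c\<in>{1..K}. P c * - ln (Q c)) + (e2 + 2 * D)" .
  define KLt where "KLt c = P c * ln (P c / Q c)" for c
  have klt: "kl_term (P c) (Q c) = ereal (KLt c)" if "c \<in> {1..K}" for c
    using Qpos[OF that] by (simp add: kl_term_def KLt_def)
  have "ereal (\<Sum>c\<in>{1..K}. KLt c) \<le> ereal e1"
  proof -
    have "(\<Sum>c\<in>{1..K}. kl_term (P c) (Q c)) = (\<Sum>c\<in>{1..K}. ereal (KLt c))"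
      by (rule sum.cong[OF refl]) (rule klt)
    then show ?thesis using KL unfolding Rt_def[symmetric] Q_def[symmetric] by (simp add: sum_ereal)
  qed
  then have KLs: "(\<Sum>c\<in>{1..K}. KLt c) \<le> e1" by simp
  have split: "P c * - ln (Q c) = KLt c + P c * - ln (P c)" if "c \<in> {1..K}" for c
  proof (cases "P c = 0")
    case True then show ?thesis by (simp add: KLt_def)
  next
    case False then have "0 < P c" using Pnn[of c] by simp
    then show ?thesis using Qpos[OF that] by (simp add: KLt_def ln_div algebra_simps)
  qed
  define Zs where "Zs = (\<Sum>i\<in>{1..K}. exp (hs i))"
  have Zspos: "0 < Zs" unfolding Zs_def using Kne by (intro sum_pos) auto
  have Ssum: "(\<Sum>c\<in>{1..K}. exp (hs c) / Zs) = 1" using Zspos by (simp add: Zs_def flip: sum_divide_distrib)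
  have "(\<Sum>c\<in>{1..K}. P c * - ln (P c)) \<le> (\<Sum>c\<in>{1..K}. P c * - ln (exp (hs c) / Zs) + (exp (hs c) / Zs - P c))"
    using Pnn Zspos by (intro sum_mono gibbs_term) auto
  also have "\<dots> = (\<Sum>c\<in>{1..K}. P c * - ln (exp (hs c) / Zs))"
    using Ssum Psum by (simp add: sum.distrib sum_subtractf sum_negf)
  finally have G: "(\<Sum>c\<in>{1..K}. P c * - ln (P c)) \<le> (\<Sum>c\<in>{1..K}. P c * - ln (exp (hs c) / Zs))" .
  have "(\<Sum>c\<in>{1..K}. P c * - ln (Q c)) = (\<Sum>c\<in>{1..K}. KLt c) + (\<Sum>c\<in>{1..K}. P c * - ln (P c))"
    by (subst sum.distrib[symmetric]) (rule sum.cong[OF refl], rule split)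
  then show ?thesis using A' KLs G unfolding Z_def Zs_def by linarith
qed


lemma lin_rep:
  fixes V :: "'a::euclidean_space set" and f :: "'b \<Rightarrow> 'a" and \<mu> :: "'b \<Rightarrow> real"
  assumes int: "\<And>v. v \<in> V \<Longrightarrow> integrable M (\<lambda>y. \<mu> y * (v \<bullet> f y))"
  shows "\<exists>w. \<forall>v\<in>V. w \<bullet> v = integral\<^sup>L M (\<lambda>y. \<mu> y * (v \<bullet> f y))"
proof -
  obtain B where B: "B \<subseteq> V" "independent B" "V \<subseteq> span B"
    by (rule maximal_independent_subset)
  define I where "I v = integral\<^sup>L M (\<lambda>y. \<mu> y * (v \<bullet> f y))" for v
  have "\<exists>g. linear g \<and> (\<forall>x\<in>B. g x = I x)"
    by (rule linear_independent_extend[OF B(2)])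
  then obtain g where g1: "linear g" and g2: "\<And>b. b \<in> B \<Longrightarrow> g b = I b"
    by blast
  have key: "integrable M (\<lambda>y. \<mu> y * (v \<bullet> f y)) \<and> I v = g v"
    if "v \<in> span B" for v
    using that
  proof (induction rule: span_induct_alt)
    case base
    have "g 0 = 0" using linear_0[OF g1] .
    then show ?case by (simp add: I_def)
  next
    case (step c b v)
    have ib: "integrable M (\<lambda>y. \<mu> y * (b \<bullet> f y))" using int B(1) step(1) by blast
    have iv: "integrable M (\<lambda>y. \<mu> y * (v \<bullet> f y))" and Iv: "I v = g v" using step(2) by auto
    have eq: "(\<lambda>y. \<mu> y * ((c *\<^sub>R b + v) \<bullet> f y)) = (\<lambda>y. c * (\<mu> y * (b \<bullet> f y)) + \<mu> y * (v \<bullet> f y))"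
      by (auto simp: inner_add_left algebra_simps)
    have i1: "integrable M (\<lambda>y. c * (\<mu> y * (b \<bullet> f y)) + \<mu> y * (v \<bullet> f y))"
      using ib iv by (intro Bochner_Integration.integrable_add integrable_mult_right)
    have "I (c *\<^sub>R b + v) = c * I b + I v"
      unfolding I_def eq using ib iv by simp
    also have "\<dots> = g (c *\<^sub>R b + v)"
      using g2[OF step(1)] Iv linear_add[OF g1] linear_scale[OF g1] by simp
    finally show ?case using i1 eq by simp
  qed
  show ?thesis
  proof (intro exI ballI)
    fix v assume "v \<in> V"
    then have "v \<in> span B" using B by blast
    have "v \<bullet> adjoint g 1 = g v \<bullet> 1" by (rule adjoint_works[OF g1])
    then have "adjoint g 1 \<bullet> v = g v" by (simp add: inner_commute)
    then show "adjoint g 1 \<bullet> v = integral\<^sup>L M (\<lambda>y. \<mu> y * (v \<bullet> f y))"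
      using key[OF \<open>v \<in> span B\<close>] by (simp add: I_def)
  qed
qed

locale T2 =
  fixes MX :: "'x measure" and MY :: "'y measure"
    and p :: "'x \<Rightarrow> 'y \<Rightarrow> real" and pX :: "'x \<Rightarrow> real" and pY :: "'y \<Rightarrow> real"
    and K :: nat
    and fX :: "'x \<Rightarrow> real ^ 'd" and fY :: "'y \<Rightarrow> real ^ 'd"
    and \<tau> \<Gamma> \<epsilon>2 \<Delta> :: real
    and Ys :: "nat \<Rightarrow> 'y set"
  assumes MX: "sigma_finite_measure MX" and MY: "sigma_finite_measure MY"
    and p_meas: "(\<lambda>(x, y). p x y) \<in> borel_measurable (MX \<Otimes>\<^sub>M MY)"
    and p_nonneg: "\<And>x y. 0 \<le> p x y"
    and p_total: "(\<integral>\<^sup>+ z. ennreal (case z of (x, y) \<Rightarrow> p x y) \<partial>(MX \<Otimes>\<^sub>M MY)) = 1"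
    and pX_marg: "\<And>x. (\<integral>\<^sup>+ y. ennreal (p x y) \<partial>MY) = ennreal (pX x)"
    and pX_nonneg: "\<And>x. 0 \<le> pX x" and pY_nonneg: "\<And>y. 0 \<le> pY y"
    and pX_meas: "pX \<in> borel_measurable MX" and pY_meas: "pY \<in> borel_measurable MY"
    and fX_meas: "fX \<in> borel_measurable MX" and fY_meas: "fY \<in> borel_measurable MY"
    and tau_pos: "0 < \<tau>"
    and Ys_sets: "\<And>i. i \<in> {1..K} \<Longrightarrow> Ys i \<in> sets MY"
    and Ys_disj: "disjoint_family_on Ys {1..K}"
    and Ys_pos: "\<And>i. i \<in> {1..K} \<Longrightarrow> 0 < prob_Y MY pY (Ys i)"
    and KL2: "\<And>x c. 0 < pX x \<Longrightarrow> c \<in> {1..K} \<Longrightarrow>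
       KL_density MY (dens_Y_given_set MY pY (Ys c)) (dens_Y_given_x_set MY p pX x (Ys c))
         \<le> ereal \<epsilon>2"
    and approx: "\<And>x y. 0 < pX x \<Longrightarrow> 0 < pY y \<Longrightarrow>
       0 < p x y \<and>
       \<bar>(fX x \<bullet> fY y) / \<tau> - (ln (p x y / (pX x * pY y)) + \<Gamma>)\<bar> \<le> \<Delta>"
begin

lemma per_xc:
  assumes x: "x \<in> space MX" "0 < pX x" and c: "c \<in> {1..K}"
  defines "A \<equiv> Ys c"
  defines "P \<equiv> prob_Y MY pY A" and "R \<equiv> prob_Y_cond MY p pX x A"
  defines "\<mu> \<equiv> dens_Y_given_set MY pY A"
  shows "0 < R \<and> integrable MY (\<lambda>y. \<mu> y * ((fX x \<bullet> fY y) / \<tau>)) \<and>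
     ln R - ln P + \<Gamma> - \<Delta> - \<epsilon>2 \<le> integral\<^sup>L MY (\<lambda>y. \<mu> y * ((fX x \<bullet> fY y) / \<tau>)) \<and>
     integral\<^sup>L MY (\<lambda>y. \<mu> y * ((fX x \<bullet> fY y) / \<tau>)) \<le> ln R - ln P + \<Gamma> + \<Delta>"
proof -
  define \<nu> where "\<nu> = dens_Y_given_x_set MY p pX x A"
  have A: "A \<in> sets MY" using Ys_sets c A_def by simp
  have Ppos: "0 < P" using Ys_pos c unfolding P_def A_def by simp
  have pxm[measurable]: "(\<lambda>y. p x y) \<in> borel_measurable MY"
    using measurable_Pair2[OF p_meas x(1)] by simp
  have pint: "integrable MY (\<lambda>y. p x y)" and pintv: "integral\<^sup>L MY (\<lambda>y. p x y) = pX x"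
    using has_bochner_integral_nn_integral[OF pxm _ pX_nonneg[of x] pX_marg[of x]] p_nonneg
    by (auto simp: has_bochner_integral_iff)
  have qint: "integrable MY (\<lambda>y. cond_dens p pX x y)" and qintv: "integral\<^sup>L MY (\<lambda>y. cond_dens p pX x y) = 1"
    using pint pintv x(2) by (auto simp: cond_dens_def)
  have pYAint: "integrable MY (\<lambda>y. indicator A y * pY y)"
    using Ppos not_integrable_integral_eq unfolding P_def prob_Y_def by fastforce
  have qAint: "integrable MY (\<lambda>y. indicator A y * cond_dens p pX x y)"
    using integrable_mult_indicator[OF A qint] by simp
  have Rnn: "0 \<le> R" unfolding R_def prob_Y_cond_def
    by (rule integral_nonneg_AE) (auto simp: cond_dens_def p_nonneg pX_nonneg)
  have key: "indicator A y * cond_dens p pX x y > 0" if "indicator A y * pY y \<noteq> 0" for y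
  proof -
    have "y \<in> A" "pY y > 0" using that pY_nonneg[of y] by (auto simp: indicator_def split: if_splits)
    then show ?thesis using approx[OF x(2), of y] x(2) by (simp add: cond_dens_def)
  qed
  have Rpos: "0 < R"
  proof (rule ccontr)
    assume "\<not> 0 < R"
    then have "R = 0" using Rnn by simp
    then have "AE y in MY. indicator A y * cond_dens p pX x y = 0"
      using integral_nonneg_eq_0_iff_AE[OF qAint] unfolding R_def prob_Y_cond_def
      by (auto simp: cond_dens_def p_nonneg pX_nonneg)
    then have "AE y in MY. indicator A y * pY y = 0"
      by (rule AE_mp) (intro AE_I2 impI, metis key less_irrefl)
    then have "P = 0" using integral_nonneg_eq_0_iff_AE[OF pYAint] unfolding P_def prob_Y_def
      by (auto simp: pY_nonneg)
    then show False using Ppos by simp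
  qed
  have mu_def': "\<mu> y = indicator A y * pY y / P" for y
    unfolding \<mu>_def dens_Y_given_set_def P_def by simp
  have nu_def': "\<nu> y = indicator A y * cond_dens p pX x y / R" for y
    unfolding \<nu>_def dens_Y_given_x_set_def R_def by simp
  have mu_nn: "0 \<le> \<mu> y" for y using Ppos pY_nonneg[of y] by (simp add: mu_def')
  have nu_nn: "0 \<le> \<nu> y" for y using Rpos p_nonneg[of x y] pX_nonneg[of x]
    by (simp add: nu_def' cond_dens_def)
  have mu_int: "integrable MY \<mu>" and mu_one: "integral\<^sup>L MY \<mu> = 1"
    using pYAint Ppos unfolding mu_def'[abs_def] by (auto simp: P_def prob_Y_def)
  have nu_int: "integrable MY \<nu>" and nu_one: "integral\<^sup>L MY \<nu> = 1"
    using qAint Rpos unfolding nu_def'[abs_def] by (auto simp: R_def prob_Y_cond_def)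
  have mum[measurable]: "\<mu> \<in> borel_measurable MY" using mu_int by auto
  have num[measurable]: "\<nu> \<in> borel_measurable MY" using nu_int by auto
  have mupos: "y \<in> A \<and> 0 < pY y \<and> 0 < p x y \<and> 0 < \<nu> y" if "0 < \<mu> y" for y
  proof -
    have "y \<in> A" "pY y > 0" using that Ppos pY_nonneg[of y]
      by (cases "y \<in> A"; auto simp: mu_def' zero_less_divide_iff)+
    then show ?thesis using approx[OF x(2), of y] x(2) Rpos by (simp add: nu_def' cond_dens_def)
  qed
  define F where "F y = (if 0 < \<mu> y then \<mu> y * ln (\<mu> y / \<nu> y) else 0)" for y
  have Fm[measurable]: "F \<in> borel_measurable MY" unfolding F_def by measurable
  have kl: "kl_term (\<mu> y) (\<nu> y) = ereal (F y)" for y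
    using mupos[of y] mu_nn[of y] by (cases "0 < \<mu> y") (auto simp: kl_term_def F_def)
  have Fge: "\<mu> y - \<nu> y \<le> F y" for y
  proof (cases "0 < \<mu> y")
    case True
    then have nu: "0 < \<nu> y" using mupos by blast
    have "ln (\<nu> y / \<mu> y) \<le> \<nu> y / \<mu> y - 1" using True nu by (intro ln_le_minus_one) simp
    moreover have "ln (\<mu> y / \<nu> y) = - ln (\<nu> y / \<mu> y)" using True nu by (simp add: ln_div)
    ultimately have "1 - \<nu> y / \<mu> y \<le> ln (\<mu> y / \<nu> y)" by simp
    then have "\<mu> y * (1 - \<nu> y / \<mu> y) \<le> \<mu> y * ln (\<mu> y / \<nu> y)"
      using True by (intro mult_left_mono) auto
    then show ?thesis using True by (simp add: F_def algebra_simps)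
  next
    case False
    then show ?thesis using mu_nn[of y] nu_nn[of y] by (simp add: F_def)
  qed
  have negfin: "(\<integral>\<^sup>+ y. ennreal (- F y) \<partial>MY) \<le> 1"
  proof -
    have "(\<integral>\<^sup>+ y. ennreal (- F y) \<partial>MY) \<le> (\<integral>\<^sup>+ y. ennreal (\<nu> y) \<partial>MY)"
    proof (intro nn_integral_mono ennreal_leI)
      fix y show "- F y \<le> \<nu> y" using Fge[of y] mu_nn[of y] by linarith
    qed
    also have "\<dots> = ennreal 1"
      using nn_integral_eq_integral[OF nu_int] nu_nn nu_one by simp
    finally show ?thesis by simp
  qed
  have KLeq: "KL_density MY \<mu> \<nu> = enn2ereal (\<integral>\<^sup>+ y. ennreal (F y) \<partial>MY) - enn2ereal (\<integral>\<^sup>+ y. ennreal (- F y) \<partial>MY)"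
    unfolding KL_density_def kl by simp
  have KLle: "KL_density MY \<mu> \<nu> \<le> ereal \<epsilon>2"
    using KL2[OF x(2) c] unfolding \<mu>_def \<nu>_def A_def .
  have negnt: "(\<integral>\<^sup>+ y. ennreal (- F y) \<partial>MY) \<noteq> \<top>"
  proof
    assume "(\<integral>\<^sup>+ y. ennreal (- F y) \<partial>MY) = \<top>"
    then show False using negfin by (simp add: top_unique)
  qed
  define b where "b = enn2real (\<integral>\<^sup>+ y. ennreal (- F y) \<partial>MY)"
  have b: "enn2ereal (\<integral>\<^sup>+ y. ennreal (- F y) \<partial>MY) = ereal b"
  proof -
    have "ennreal b = (\<integral>\<^sup>+ y. ennreal (- F y) \<partial>MY)" using negnt unfolding b_def by (simp add: ennreal_enn2real_if)
    then show ?thesis by (metis enn2ereal_ennreal enn2real_nonneg b_def)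
  qed
  have posfin: "(\<integral>\<^sup>+ y. ennreal (F y) \<partial>MY) \<noteq> \<top>"
  proof
    assume inf: "(\<integral>\<^sup>+ y. ennreal (F y) \<partial>MY) = \<top>"
    then have "KL_density MY \<mu> \<nu> = \<infinity>" unfolding KLeq b by simp
    then show False using KLle by simp
  qed
  define a where "a = enn2real (\<integral>\<^sup>+ y. ennreal (F y) \<partial>MY)"
  have a: "enn2ereal (\<integral>\<^sup>+ y. ennreal (F y) \<partial>MY) = ereal a"
  proof -
    have "ennreal a = (\<integral>\<^sup>+ y. ennreal (F y) \<partial>MY)" using posfin unfolding a_def by (simp add: ennreal_enn2real_if)
    then show ?thesis by (metis enn2ereal_ennreal enn2real_nonneg a_def)
  qed
  have Fint: "integrable MY F"
    unfolding real_integrable_def using posfin negnt by auto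
  have intF: "integral\<^sup>L MY F \<le> \<epsilon>2"
  proof -
    have "ereal (integral\<^sup>L MY F) = KL_density MY \<mu> \<nu>"
      unfolding KLeq real_lebesgue_integral_def[OF Fint] a b a_def[symmetric] b_def[symmetric] by simp
    then show ?thesis using KLle by (metis ereal_less_eq(3))
  qed
  have intF0: "0 \<le> integral\<^sup>L MY F"
  proof -
    have "integral\<^sup>L MY (\<lambda>y. \<mu> y - \<nu> y) \<le> integral\<^sup>L MY F"
      using Fge by (intro integral_mono mu_int nu_int Fint Bochner_Integration.integrable_diff) auto
    then show ?thesis using mu_one nu_one mu_int nu_int by simp
  qed
  define C where "C = ln R - ln P + \<Gamma>"
  define g where "g y = (fX x \<bullet> fY y) / \<tau>" for y
  have gm[measurable]: "g \<in> borel_measurable MY" unfolding g_def by measurable (auto intro: fY_meas)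
  have sand: "\<mu> y * (C - \<Delta>) - F y \<le> \<mu> y * g y \<and> \<mu> y * g y \<le> \<mu> y * (C + \<Delta>) - F y" for y
  proof (cases "0 < \<mu> y")
    case True
    from mupos[OF True] have yA: "y \<in> A" and pYy: "0 < pY y" and pxy: "0 < p x y" and nuy: "0 < \<nu> y" by auto
    have mu_eq: "\<mu> y = pY y / P" using yA by (simp add: mu_def')
    have nu_eq: "\<nu> y = (p x y / pX x) / R" using yA by (simp add: nu_def' cond_dens_def)
    have lnr: "ln (\<mu> y / \<nu> y) = ln (pY y) - ln P - ln (p x y) + ln (pX x) + ln R"
      unfolding mu_eq nu_eq using pYy Ppos pxy x(2) Rpos by (simp add: ln_div ln_mult)
    have lnq: "ln (p x y / (pX x * pY y)) = ln (p x y) - ln (pX x) - ln (pY y)"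
      using pYy pxy x(2) by (simp add: ln_div ln_mult)
    have ap: "\<bar>g y - (ln (p x y / (pX x * pY y)) + \<Gamma>)\<bar> \<le> \<Delta>" using approx[OF x(2) pYy] by (simp add: g_def)
    have Fy: "F y = \<mu> y * ln (\<mu> y / \<nu> y)" using True by (simp add: F_def)
    have "C - \<Delta> \<le> g y + ln (\<mu> y / \<nu> y)" "g y + ln (\<mu> y / \<nu> y) \<le> C + \<Delta>"
      using ap unfolding lnr lnq C_def by linarith+
    then have "\<mu> y * (C - \<Delta>) \<le> \<mu> y * (g y + ln (\<mu> y / \<nu> y))" "\<mu> y * (g y + ln (\<mu> y / \<nu> y)) \<le> \<mu> y * (C + \<Delta>)"
      using True by (auto intro: mult_left_mono)
    then show ?thesis unfolding Fy by (simp add: algebra_simps)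
  next
    case False
    then have "\<mu> y = 0" using mu_nn[of y] by simp
    then show ?thesis by (simp add: F_def)
  qed
  have lo_int: "integrable MY (\<lambda>y. \<mu> y * (C - \<Delta>) - F y)" using mu_int Fint by auto
  have up_int: "integrable MY (\<lambda>y. \<mu> y * (C + \<Delta>) - F y)" using mu_int Fint by auto
  have mg_int: "integrable MY (\<lambda>y. \<mu> y * g y)"
  proof (rule Bochner_Integration.integrable_bound[of _ "\<lambda>y. \<bar>\<mu> y * (C - \<Delta>) - F y\<bar> + \<bar>\<mu> y * (C + \<Delta>) - F y\<bar>"])
    show "integrable MY (\<lambda>y. \<bar>\<mu> y * (C - \<Delta>) - F y\<bar> + \<bar>\<mu> y * (C + \<Delta>) - F y\<bar>)"
      using lo_int up_int by auto
    show "(\<lambda>y. \<mu> y * g y) \<in> borel_measurable MY" by measurable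
    show "AE y in MY. norm (\<mu> y * g y) \<le> norm (\<bar>\<mu> y * (C - \<Delta>) - F y\<bar> + \<bar>\<mu> y * (C + \<Delta>) - F y\<bar>)"
    proof (intro AE_I2)
      fix y
      let ?lo = "\<mu> y * (C - \<Delta>) - F y" and ?up = "\<mu> y * (C + \<Delta>) - F y"
      have s: "?lo \<le> \<mu> y * g y" "\<mu> y * g y \<le> ?up" using sand[of y] by auto
      have "\<bar>\<mu> y * g y\<bar> \<le> \<bar>?lo\<bar> + \<bar>?up\<bar>"
        using s abs_ge_self[of ?up] abs_ge_minus_self[of ?lo] abs_ge_zero[of ?lo] abs_ge_zero[of ?up]
        by (intro abs_leI) linarith+
      then show "norm (\<mu> y * g y) \<le> norm (\<bar>?lo\<bar> + \<bar>?up\<bar>)" by simp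
    qed
  qed
  have I1: "integral\<^sup>L MY (\<lambda>y. \<mu> y * g y) \<le> integral\<^sup>L MY (\<lambda>y. \<mu> y * (C + \<Delta>) - F y)"
    using sand by (intro integral_mono mg_int up_int) auto
  have I2: "integral\<^sup>L MY (\<lambda>y. \<mu> y * (C - \<Delta>) - F y) \<le> integral\<^sup>L MY (\<lambda>y. \<mu> y * g y)"
    using sand by (intro integral_mono mg_int lo_int) auto
  have E1: "integral\<^sup>L MY (\<lambda>y. \<mu> y * (C + \<Delta>) - F y) = (C + \<Delta>) - integral\<^sup>L MY F"
    using mu_int Fint mu_one by simp
  have E2: "integral\<^sup>L MY (\<lambda>y. \<mu> y * (C - \<Delta>) - F y) = (C - \<Delta>) - integral\<^sup>L MY F"
    using mu_int Fint mu_one by simp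
  have gg: "(\<lambda>y. \<mu> y * g y) = (\<lambda>y. \<mu> y * ((fX x \<bullet> fY y) / \<tau>))" by (simp add: g_def)
  have i1a: "integral\<^sup>L MY (\<lambda>y. \<mu> y * g y) \<le> (C + \<Delta>) - integral\<^sup>L MY F" using I1 unfolding E1 .
  have i1b: "(C + \<Delta>) - integral\<^sup>L MY F \<le> C + \<Delta>" using intF0 by simp
  have i1: "integral\<^sup>L MY (\<lambda>y. \<mu> y * g y) \<le> C + \<Delta>" using i1a i1b by (rule order_trans)
  have i2a: "(C - \<Delta>) - integral\<^sup>L MY F \<le> integral\<^sup>L MY (\<lambda>y. \<mu> y * g y)" using I2 unfolding E2 .
  have i2b: "C - \<Delta> - \<epsilon>2 \<le> (C - \<Delta>) - integral\<^sup>L MY F" using intF by simp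
  have i2: "C - \<Delta> - \<epsilon>2 \<le> integral\<^sup>L MY (\<lambda>y. \<mu> y * g y)" using i2b i2a by (rule order_trans)
  show ?thesis using Rpos mg_int[unfolded gg] i1[unfolded gg C_def] i2[unfolded gg C_def] by blast
qed

lemma W_exists:
  "\<exists>W b. \<forall>c\<in>{1..K}. \<forall>x\<in>space MX. 0 < pX x \<longrightarrow>
     ln (prob_Y_cond MY p pX x (Ys c)) - \<epsilon>2 - \<Delta> \<le> W c \<bullet> fX x + b c \<and>
     W c \<bullet> fX x + b c \<le> ln (prob_Y_cond MY p pX x (Ys c)) + \<Delta>"
proof -
  have "\<forall>c\<in>{1..K}. \<exists>w. \<forall>x\<in>space MX. 0 < pX x \<longrightarrow>
     w \<bullet> fX x = integral\<^sup>L MY (\<lambda>y. dens_Y_given_set MY pY (Ys c) y * ((fX x \<bullet> fY y) / \<tau>))"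
  proof
    fix c assume c: "c \<in> {1..K}"
    define \<mu> where "\<mu> = dens_Y_given_set MY pY (Ys c)"
    have "\<exists>w. \<forall>v\<in>fX ` {x\<in>space MX. 0 < pX x}. w \<bullet> v = integral\<^sup>L MY (\<lambda>y. \<mu> y * (v \<bullet> fY y))"
    proof (rule lin_rep)
      fix v assume "v \<in> fX ` {x\<in>space MX. 0 < pX x}"
      then obtain x where x: "x \<in> space MX" "0 < pX x" and v: "v = fX x" by auto
      have "integrable MY (\<lambda>y. \<mu> y * ((fX x \<bullet> fY y) / \<tau>))"
        using per_xc[OF x c] unfolding \<mu>_def by blast
      then have "integrable MY (\<lambda>y. \<tau> * (\<mu> y * ((fX x \<bullet> fY y) / \<tau>)))"
        by (rule integrable_mult_right)
      moreover have "(\<lambda>y. \<tau> * (\<mu> y * ((fX x \<bullet> fY y) / \<tau>))) = (\<lambda>y. \<mu> y * (v \<bullet> fY y))"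
        using tau_pos v by (auto simp: field_simps)
      ultimately show "integrable MY (\<lambda>y. \<mu> y * (v \<bullet> fY y))" by simp
    qed
    then obtain w where w: "\<And>v. v\<in>fX ` {x\<in>space MX. 0 < pX x} \<Longrightarrow> w \<bullet> v = integral\<^sup>L MY (\<lambda>y. \<mu> y * (v \<bullet> fY y))"
      by blast
    show "\<exists>w. \<forall>x\<in>space MX. 0 < pX x \<longrightarrow>
     w \<bullet> fX x = integral\<^sup>L MY (\<lambda>y. dens_Y_given_set MY pY (Ys c) y * ((fX x \<bullet> fY y) / \<tau>))"
    proof (intro exI[of _ "w /\<^sub>R \<tau>"] ballI impI)
      fix x assume "x \<in> space MX" "0 < pX x"
      then have "w \<bullet> fX x = integral\<^sup>L MY (\<lambda>y. \<mu> y * (fX x \<bullet> fY y))" using w by blast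
      moreover have "integral\<^sup>L MY (\<lambda>y. \<mu> y * ((fX x \<bullet> fY y) / \<tau>)) = integral\<^sup>L MY (\<lambda>y. \<mu> y * (fX x \<bullet> fY y)) / \<tau>"
        by (simp add: mult.assoc flip: integral_divide_zero)
      ultimately show "(w /\<^sub>R \<tau>) \<bullet> fX x = integral\<^sup>L MY (\<lambda>y. dens_Y_given_set MY pY (Ys c) y * ((fX x \<bullet> fY y) / \<tau>))"
        unfolding \<mu>_def by (simp add: divide_inverse mult.commute)
    qed
  qed
  then obtain W where W0: "\<forall>c\<in>{1..K}. \<forall>x\<in>space MX. 0 < pX x \<longrightarrow>
     W c \<bullet> fX x = integral\<^sup>L MY (\<lambda>y. dens_Y_given_set MY pY (Ys c) y * ((fX x \<bullet> fY y) / \<tau>))"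
    by (rule bchoice[THEN exE]) blast
  have W: "\<And>c x. c \<in> {1..K} \<Longrightarrow> x \<in> space MX \<Longrightarrow> 0 < pX x \<Longrightarrow>
     W c \<bullet> fX x = integral\<^sup>L MY (\<lambda>y. dens_Y_given_set MY pY (Ys c) y * ((fX x \<bullet> fY y) / \<tau>))"
    using W0 by blast
  show ?thesis
  proof (intro exI[of _ W] exI[of _ "\<lambda>c. ln (prob_Y MY pY (Ys c)) - \<Gamma>"] ballI impI)
    fix c x assume c: "c \<in> {1..K}" and x: "x \<in> space MX" "0 < pX x"
    show "ln (prob_Y_cond MY p pX x (Ys c)) - \<epsilon>2 - \<Delta> \<le> W c \<bullet> fX x + (ln (prob_Y MY pY (Ys c)) - \<Gamma>) \<and>
       W c \<bullet> fX x + (ln (prob_Y MY pY (Ys c)) - \<Gamma>) \<le> ln (prob_Y_cond MY p pX x (Ys c)) + \<Delta>"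
      using per_xc[OF x c] W[OF c x] by linarith
  qed
qed

lemma union_sum:
  assumes x: "x \<in> space MX" "0 < pX x"
  shows "prob_Y_cond MY p pX x (\<Union>i\<in>{1..K}. Ys i) = (\<Sum>i\<in>{1..K}. prob_Y_cond MY p pX x (Ys i))"
proof -
  have pxm[measurable]: "(\<lambda>y. p x y) \<in> borel_measurable MY"
    using measurable_Pair2[OF p_meas x(1)] by simp
  have pint: "integrable MY (\<lambda>y. p x y)"
    using has_bochner_integral_nn_integral[OF pxm _ pX_nonneg[of x] pX_marg[of x]] p_nonneg
    by (auto simp: has_bochner_integral_iff)
  have qint: "integrable MY (\<lambda>y. cond_dens p pX x y)"
    using pint by (auto simp: cond_dens_def)
  have "prob_Y_cond MY p pX x (\<Union>i\<in>{1..K}. Ys i) = integral\<^sup>L MY (\<lambda>y. \<Sum>i\<in>{1..K}. indicator (Ys i) y * cond_dens p pX x y)"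
    unfolding prob_Y_cond_def indicator_UN_disjoint[OF finite_atLeastAtMost Ys_disj]
    by (simp add: sum_distrib_right)
  also have "\<dots> = (\<Sum>i\<in>{1..K}. prob_Y_cond MY p pX x (Ys i))"
    unfolding prob_Y_cond_def
    by (rule Bochner_Integration.integral_sum) (use integrable_mult_indicator[OF Ys_sets qint] in auto)
  finally show ?thesis .
qed

end


theorem theorem2:
  fixes MX :: "'x measure" and MY :: "'y measure"
    and p :: "'x \<Rightarrow> 'y \<Rightarrow> real" and pX :: "'x \<Rightarrow> real" and pY :: "'y \<Rightarrow> real"
    and K :: nat and PC :: "'x \<Rightarrow> nat \<Rightarrow> real"
    and fX :: "'x \<Rightarrow> real ^ 'd" and fY :: "'y \<Rightarrow> real ^ 'd"
    and \<tau> \<Gamma> \<epsilon>1 \<epsilon>2 \<Delta> :: real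
    and Ys :: "nat \<Rightarrow> 'y set"
    and hstar :: "'x \<Rightarrow> nat \<Rightarrow> real"
  assumes MX: "sigma_finite_measure MX" and MY: "sigma_finite_measure MY"
    and p_meas: "(\<lambda>(x, y). p x y) \<in> borel_measurable (MX \<Otimes>\<^sub>M MY)"
    and p_nonneg: "\<And>x y. 0 \<le> p x y"
    and p_total: "(\<integral>\<^sup>+ z. ennreal (case z of (x, y) \<Rightarrow> p x y) \<partial>(MX \<Otimes>\<^sub>M MY)) = 1"
    and pX_marg: "\<And>x. (\<integral>\<^sup>+ y. ennreal (p x y) \<partial>MY) = ennreal (pX x)"
    and pY_marg: "\<And>y. (\<integral>\<^sup>+ x. ennreal (p x y) \<partial>MX) = ennreal (pY y)"
    and pX_nonneg: "\<And>x. 0 \<le> pX x" and pY_nonneg: "\<And>y. 0 \<le> pY y"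
    and pX_meas: "pX \<in> borel_measurable MX" and pY_meas: "pY \<in> borel_measurable MY"
    and K_pos: "1 \<le> K"
    and PC_meas: "\<And>c. (\<lambda>x. PC x c) \<in> borel_measurable MX"
    and PC_nonneg: "\<And>x c. 0 \<le> PC x c"
    and PC_sum: "\<And>x. (\<Sum>c\<in>{1..K}. PC x c) = 1"
    and fX_meas: "fX \<in> borel_measurable MX" and fY_meas: "fY \<in> borel_measurable MY"
    and tau_pos: "0 < \<tau>"
    and Ys_sets: "\<And>i. i \<in> {1..K} \<Longrightarrow> Ys i \<in> sets MY"
    and Ys_disj: "disjoint_family_on Ys {1..K}"
    and Ys_pos: "\<And>i. i \<in> {1..K} \<Longrightarrow> 0 < prob_Y MY pY (Ys i)"
    and eps1_nonneg: "0 \<le> \<epsilon>1" and eps2_nonneg: "0 \<le> \<epsilon>2"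
    and KL1: "\<And>x. 0 < pX x \<Longrightarrow>
       KL_discrete K (PC x) (class_post_sets MY p pX K Ys x) \<le> ereal \<epsilon>1"
    and KL2: "\<And>x c. 0 < pX x \<Longrightarrow> c \<in> {1..K} \<Longrightarrow>
       KL_density MY (dens_Y_given_set MY pY (Ys c)) (dens_Y_given_x_set MY p pX x (Ys c))
         \<le> ereal \<epsilon>2"
    and Delta_nonneg: "0 \<le> \<Delta>"
    and approx: "\<And>x y. 0 < pX x \<Longrightarrow> 0 < pY y \<Longrightarrow>
       0 < p x y \<and>
       \<bar>(fX x \<bullet> fY y) / \<tau> - (ln (p x y / (pX x * pY y)) + \<Gamma>)\<bar> \<le> \<Delta>"
    and hstar_meas: "\<And>c. (\<lambda>x. hstar x c) \<in> borel_measurable MX"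
    and hstar_min: "\<And>h. (\<And>c. (\<lambda>x. h x c) \<in> borel_measurable MX) \<Longrightarrow>
       L_sup MX pX PC K hstar \<le> L_sup MX pX PC K h"
  shows "(INF Wb \<in> (UNIV :: ((nat \<Rightarrow> real ^ 'd) \<times> (nat \<Rightarrow> real)) set).
            L_sup MX pX PC K (\<lambda>x c. fst Wb c \<bullet> fX x + snd Wb c))
         \<le> L_sup MX pX PC K hstar + ennreal (\<epsilon>1 + \<epsilon>2 + 2 * \<Delta>)"
proof -
  have T: "T2 MX MY p pX pY K fX fY \<tau> \<Gamma> \<epsilon>2 \<Delta> Ys"
    by (rule T2.intro) (fact MX MY p_meas p_nonneg p_total pX_marg pX_nonneg pY_nonneg pX_meas pY_meas
        fX_meas fY_meas tau_pos Ys_sets Ys_disj Ys_pos KL2 approx)+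
  obtain W b where Wb: "\<forall>c\<in>{1..K}. \<forall>x\<in>space MX. 0 < pX x \<longrightarrow>
     ln (prob_Y_cond MY p pX x (Ys c)) - \<epsilon>2 - \<Delta> \<le> W c \<bullet> fX x + b c \<and>
     W c \<bullet> fX x + b c \<le> ln (prob_Y_cond MY p pX x (Ys c)) + \<Delta>"
    using T2.W_exists[OF T] by blast
  define h where "h x c = W c \<bullet> fX x + b c" for x c
  define CE where "CE hh x = (\<Sum>c\<in>{1..K}. PC x c * - ln (exp (hh x c) / (\<Sum>i\<in>{1..K}. exp (hh x i))))"
    for hh :: "'x \<Rightarrow> nat \<Rightarrow> real" and x
  define \<epsilon> where "\<epsilon> = \<epsilon>1 + \<epsilon>2 + 2 * \<Delta>"
  have \<epsilon>_nn: "0 \<le> \<epsilon>" unfolding \<epsilon>_def using eps1_nonneg eps2_nonneg Delta_nonneg by simp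
  have pt: "CE h x \<le> CE hstar x + \<epsilon>" if x: "x \<in> space MX" "0 < pX x" for x
  proof -
    have rpos: "0 < prob_Y_cond MY p pX x (Ys c)" if "c \<in> {1..K}" for c
      using T2.per_xc[OF T x that] by blast
    have KL: "(\<Sum>c\<in>{1..K}. kl_term (PC x c) (prob_Y_cond MY p pX x (Ys c) /
               (\<Sum>i\<in>{1..K}. prob_Y_cond MY p pX x (Ys i)))) \<le> ereal \<epsilon>1"
      using KL1[OF x(2)] unfolding KL_discrete_def class_post_sets_def T2.union_sum[OF T x] .
    show ?thesis unfolding CE_def \<epsilon>_def
    proof (rule ce_bound[where r = "\<lambda>c. prob_Y_cond MY p pX x (Ys c)"])
      show "\<And>c. 0 \<le> PC x c" by (rule PC_nonneg)
      show "(\<Sum>c\<in>{1..K}. PC x c) = 1" by (rule PC_sum)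
      show "\<And>c. c \<in> {1..K} \<Longrightarrow> 0 < prob_Y_cond MY p pX x (Ys c)" by (rule rpos)
      show "(\<Sum>c\<in>{1..K}. kl_term (PC x c) (prob_Y_cond MY p pX x (Ys c) /
               (\<Sum>i\<in>{1..K}. prob_Y_cond MY p pX x (Ys i)))) \<le> ereal \<epsilon>1" by (rule KL)
      show "\<And>c. c \<in> {1..K} \<Longrightarrow> ln (prob_Y_cond MY p pX x (Ys c)) - \<epsilon>2 - \<Delta> \<le> h x c"
        using Wb x unfolding h_def by blast
      show "\<And>c. c \<in> {1..K} \<Longrightarrow> h x c \<le> ln (prob_Y_cond MY p pX x (Ys c)) + \<Delta>"
        using Wb x unfolding h_def by blast
    qed
  qed
  have CE_nn: "0 \<le> CE hh x" for hh x
    unfolding CE_def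
  proof (intro sum_nonneg)
    fix c assume c: "c \<in> {1..K}"
    have "exp (hh x c) \<le> (\<Sum>i\<in>{1..K}. exp (hh x i))"
      using c by (intro member_le_sum) auto
    moreover have "0 < exp (hh x c)" by simp
    ultimately have Zp: "0 < (\<Sum>i\<in>{1..K}. exp (hh x i))" by linarith
    have "exp (hh x c) / (\<Sum>i\<in>{1..K}. exp (hh x i)) \<le> 1"
      using Zp \<open>exp (hh x c) \<le> (\<Sum>i\<in>{1..K}. exp (hh x i))\<close> by (simp add: divide_le_eq_1)
    moreover have "0 < exp (hh x c) / (\<Sum>i\<in>{1..K}. exp (hh x i))" using Zp by simp
    ultimately have "ln (exp (hh x c) / (\<Sum>i\<in>{1..K}. exp (hh x i))) \<le> 0"
      by simp
    then show "0 \<le> PC x c * - ln (exp (hh x c) / (\<Sum>i\<in>{1..K}. exp (hh x i)))"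
      using PC_nonneg[of x c] by (simp add: mult_nonneg_nonpos)
  qed
  have Lh: "L_sup MX pX PC K (\<lambda>x c. fst (W, b) c \<bullet> fX x + snd (W, b) c) = (\<integral>\<^sup>+ x. ennreal (pX x * CE h x) \<partial>MX)"
    unfolding L_sup_def CE_def h_def by simp
  have Lhs: "L_sup MX pX PC K hstar = (\<integral>\<^sup>+ x. ennreal (pX x * CE hstar x) \<partial>MX)"
    unfolding L_sup_def CE_def by simp
  have CEm[measurable]: "(\<lambda>x. CE hstar x) \<in> borel_measurable MX"
    unfolding CE_def using hstar_meas PC_meas by measurable
  have pXint: "(\<integral>\<^sup>+ x. ennreal (pX x) \<partial>MX) = 1"
  proof -
    have "(\<integral>\<^sup>+ x. ennreal (pX x) \<partial>MX) = (\<integral>\<^sup>+ x. \<integral>\<^sup>+ y. ennreal (case (x, y) of (x, y) \<Rightarrow> p x y) \<partial>MY \<partial>MX)"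
      using pX_marg by simp
    also have "\<dots> = (\<integral>\<^sup>+ z. ennreal (case z of (x, y) \<Rightarrow> p x y) \<partial>(MX \<Otimes>\<^sub>M MY))"
    proof (intro sigma_finite_measure.nn_integral_fst[OF MY])
      have pm2[measurable]: "(\<lambda>z. p (fst z) (snd z)) \<in> borel_measurable (MX \<Otimes>\<^sub>M MY)"
        using p_meas by (simp add: case_prod_beta')
      show "(\<lambda>z. ennreal (case z of (x, y) \<Rightarrow> p x y)) \<in> borel_measurable (MX \<Otimes>\<^sub>M MY)"
        by (simp add: case_prod_beta')
    qed
    finally show ?thesis using p_total by simp
  qed
  have "L_sup MX pX PC K (\<lambda>x c. fst (W, b) c \<bullet> fX x + snd (W, b) c)
      \<le> (\<integral>\<^sup>+ x. ennreal (pX x * CE hstar x) + ennreal (\<epsilon> * pX x) \<partial>MX)"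
    unfolding Lh
  proof (intro nn_integral_mono)
    fix x assume x: "x \<in> space MX"
    show "ennreal (pX x * CE h x) \<le> ennreal (pX x * CE hstar x) + ennreal (\<epsilon> * pX x)"
    proof (cases "0 < pX x")
      case True
      have "pX x * CE h x \<le> pX x * (CE hstar x + \<epsilon>)"
        using pt[OF x True] True by (intro mult_left_mono) auto
      then have "ennreal (pX x * CE h x) \<le> ennreal (pX x * CE hstar x + \<epsilon> * pX x)"
        by (intro ennreal_leI) (simp add: algebra_simps)
      also have "\<dots> = ennreal (pX x * CE hstar x) + ennreal (\<epsilon> * pX x)"
        using CE_nn[of hstar x] pX_nonneg[of x] \<epsilon>_nn by (intro ennreal_plus) auto
      finally show ?thesis .
    next
      case False
      then have "pX x = 0" using pX_nonneg[of x] by simp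
      then show ?thesis by simp
    qed
  qed
  also have "\<dots> = (\<integral>\<^sup>+ x. ennreal (pX x * CE hstar x) \<partial>MX) + (\<integral>\<^sup>+ x. ennreal (\<epsilon> * pX x) \<partial>MX)"
  proof (rule nn_integral_add)
    have [measurable]: "pX \<in> borel_measurable MX" by (rule pX_meas)
    show "(\<lambda>x. ennreal (pX x * CE hstar x)) \<in> borel_measurable MX" by measurable
    show "(\<lambda>x. ennreal (\<epsilon> * pX x)) \<in> borel_measurable MX" by measurable
  qed
  also have "(\<integral>\<^sup>+ x. ennreal (\<epsilon> * pX x) \<partial>MX) = ennreal \<epsilon> * (\<integral>\<^sup>+ x. ennreal (pX x) \<partial>MX)"
    using \<epsilon>_nn pX_nonneg by (simp add: ennreal_mult nn_integral_cmult pX_meas)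
  also have "\<dots> = ennreal \<epsilon>" using pXint by simp
  finally have main: "L_sup MX pX PC K (\<lambda>x c. fst (W, b) c \<bullet> fX x + snd (W, b) c)
      \<le> L_sup MX pX PC K hstar + ennreal (\<epsilon>1 + \<epsilon>2 + 2 * \<Delta>)"
    unfolding Lhs \<epsilon>_def .
  show ?thesis
  proof (rule order_trans[OF _ main])
    show "(INF Wb \<in> (UNIV :: ((nat \<Rightarrow> real ^ 'd) \<times> (nat \<Rightarrow> real)) set).
            L_sup MX pX PC K (\<lambda>x c. fst Wb c \<bullet> fX x + snd Wb c))
         \<le> L_sup MX pX PC K (\<lambda>x c. fst (W, b) c \<bullet> fX x + snd (W, b) c)"
      by (rule INF_lower) simp
  qed
qed

end
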